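(* For $k\in\mathbb{N}$: (1) $\mathcal{G}(2k)=k+1$; (2) $\beta_f(2k)-(k+2)=O(1/k)$; (3) $\beta_c(2k)-(k+2)\to0$ as $k\to\infty$; (4) $\mathcal{G}(2k+1)-(k+2)=O(1/k)$; (5) $\beta_f(2k+1)-(k+2)\to0$ as $k\to\infty$; (6) $\beta_c(2k+1)-(k+2)\to0$ as $k\to\infty$.
   Context: $\mathcal{G}(2k)=k+1$ and $\mathcal{G}(2k+1)=\frac{k+1+\sqrt{k^2+6k+5}}{2}$. $\beta_f(2k)=\frac{k+1+\sqrt{k^2+6k+1}}{2}$, and $\beta_f(2k+1)$ is the largest real root of $x^3-(k+2)x^2+x-(k+1)=0$. Let $(\lambda_i)_{i\ge0}$ be the Thue–Morse sequence: $\lambda_0=0$, $\lambda_{2i}=\lambda_i$, $\lambda_{2i+1}=1-\lambda_i$. For $i\ge1$ set $\lambda_i(m)=k+\lambda_i-\lambda_{i-1}$ if $m=2k$ and $\lambda_i(m)=k+\lambda_i$ if $m=2k+1$. Then $\beta_c(m)$ is the unique solution $\beta>1$ of $\sum_{i=1}^\infty \lambda_i(m)\beta^{-i}=1$. *)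

theory Defs
  imports "HOL-Analysis.Analysis" "HOL-Library.Landau_Symbols"
begin

definition G :: "nat \<Rightarrow> real" where
  "G m = (let k = real (m div 2) in
           if even m then k + 1 else (k + 1 + sqrt (k^2 + 6*k + 5)) / 2)"

definition beta_f :: "nat \<Rightarrow> real" where
  "beta_f m = (let k = real (m div 2) in
           if even m then (k + 1 + sqrt (k^2 + 6*k + 1)) / 2
           else Max {x :: real. x^3 - (k+2) * x^2 + x - (k+1) = 0})"

fun thue_morse :: "nat \<Rightarrow> int" where
  "thue_morse n = (if n = 0 then 0
                   else if even n then thue_morse (n div 2)
                   else 1 - thue_morse (n div 2))"

text \<open>lambda_i(m), meaningful for i \<ge> 1.\<close>
definition lam :: "nat \<Rightarrow> nat \<Rightarrow> int" where
  "lam m i = (let k = int (m div 2) in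
           if even m then k + thue_morse i - thue_morse (i - 1)
           else k + thue_morse i)"

definition beta_c :: "nat \<Rightarrow> real" where
  "beta_c m = (THE \<beta>. \<beta> > 1 \<and>
       (\<lambda>i. real_of_int (lam m (Suc i)) / \<beta> ^ Suc i) sums 1)"

end

theory Submission imports Defs "HOL-Real_Asymp.Real_Asymp" "HOL-Computational_Algebra.Polynomial" begin

declare thue_morse.simps[simp del]
lemma tm01: "thue_morse n = 0 \<or> thue_morse n = 1"
proof (induction n rule: less_induct)
  case (less n) show ?case
    using less[of "n div 2"] thue_morse.simps[of n] by (cases "n=0") auto
qed
lemma tm0: "thue_morse 0 = 0" using thue_morse.simps[of 0] by simp
lemma tm1: "thue_morse 1 = 1" using thue_morse.simps[of 1] tm0 by simp
lemma tm1s: "thue_morse (Suc 0) = 1" using tm1 by simp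
lemma tm2: "thue_morse 2 = 1" using thue_morse.simps[of 2] tm1 by simp

definition S :: "(nat \<Rightarrow> real) \<Rightarrow> real \<Rightarrow> real" where
  "S c \<beta> = (\<Sum>i. c (Suc i) / \<beta> ^ Suc i)"

lemma geo_sums:
  fixes \<beta> :: real assumes "\<beta> > 1"
  shows "(\<lambda>i. 1 / \<beta> ^ Suc i) sums (1/(\<beta>-1))"
proof -
  have "norm (1/\<beta>) < 1" using assms by simp
  from sums_mult[OF geometric_sums[OF this], of "1/\<beta>"]
  have "(\<lambda>n. 1/\<beta> * (1/\<beta>)^n) sums (1/\<beta> * (1 / (1 - 1/\<beta>)))" .
  moreover have "1/\<beta> * (1 / (1 - 1/\<beta>)) = 1/(\<beta>-1)" using assms by (simp add: field_simps)
  moreover have "(\<lambda>n. 1/\<beta> * (1/\<beta>)^n) = (\<lambda>i. 1 / \<beta> ^ Suc i)"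
    by (simp add: power_one_over)
  ultimately show ?thesis by simp
qed

lemma summ:
  fixes c :: "nat \<Rightarrow> real"
  assumes M: "\<And>i. \<bar>c i\<bar> \<le> M" and b: "\<beta> > 1"
  shows "summable (\<lambda>i. c (Suc i) / \<beta> ^ Suc i)"
proof (rule summable_comparison_test[where g="\<lambda>i. M * (1 / \<beta> ^ Suc i)"])
  show "summable (\<lambda>i. M * (1 / \<beta> ^ Suc i))"
    using geo_sums[OF b] by (intro summable_mult) (auto simp: sums_iff)
  show "\<exists>N. \<forall>n\<ge>N. norm (c (Suc n) / \<beta> ^ Suc n) \<le> M * (1 / \<beta> ^ Suc n)"
    using M b by (auto simp: abs_divide divide_right_mono)
qed

lemma upper:
  fixes c :: "nat \<Rightarrow> real"
  assumes M: "\<And>i. \<bar>c i\<bar> \<le> M" and b: "\<beta> > 1" and hi: "\<And>i. i \<ge> 3 \<Longrightarrow> c i \<le> hi"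
  shows "S c \<beta> \<le> hi/(\<beta>-1) + (c 1 - hi)/\<beta> + (c 2 - hi)/\<beta>^2"
proof -
  define h where "h i = (if i = 0 then (c 1 - hi)/\<beta> else if i = 1 then (c 2 - hi)/\<beta>^2 else 0)" for i :: nat
  have hs: "h sums (\<Sum>n\<in>{0,1}. h n)"
    by (rule sums_finite) (auto simp: h_def)
  have g: "(\<lambda>i. hi * (1 / \<beta> ^ Suc i)) sums (hi * (1/(\<beta>-1)))"
    by (rule sums_mult[OF geo_sums[OF b]])
  have gs: "(\<lambda>i. hi * (1 / \<beta> ^ Suc i) + h i) sums (hi/(\<beta>-1) + (c 1 - hi)/\<beta> + (c 2 - hi)/\<beta>^2)"
    using sums_add[OF g hs] by (simp add: h_def add.assoc)
  have "S c \<beta> \<le> (\<Sum>i. hi * (1 / \<beta> ^ Suc i) + h i)"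
    unfolding S_def
  proof (rule suminf_le)
    fix i show "c (Suc i) / \<beta> ^ Suc i \<le> hi * (1 / \<beta> ^ Suc i) + h i"
    proof (cases "i \<le> 1")
      case True then show ?thesis using b by (cases i) (auto simp: h_def field_simps power2_eq_square numeral_2_eq_2)
    next
      case False
      then have "c (Suc i) \<le> hi" using hi by auto
      then show ?thesis using False b by (simp add: h_def divide_right_mono)
    qed
  qed (use summ[of c M, OF M b] gs in \<open>auto simp: sums_iff\<close>)
  then show ?thesis using gs by (simp add: sums_iff)
qed

lemma lower:
  fixes c :: "nat \<Rightarrow> real"
  assumes M: "\<And>i. \<bar>c i\<bar> \<le> M" and b: "\<beta> > 1" and lo: "\<And>i. i \<ge> 3 \<Longrightarrow> lo \<le> c i"
  shows "lo/(\<beta>-1) + (c 1 - lo)/\<beta> + (c 2 - lo)/\<beta>^2 \<le> S c \<beta>"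
proof -
  define h where "h i = (if i = 0 then (c 1 - lo)/\<beta> else if i = 1 then (c 2 - lo)/\<beta>^2 else 0)" for i :: nat
  have hs: "h sums (\<Sum>n\<in>{0,1}. h n)"
    by (rule sums_finite) (auto simp: h_def)
  have g: "(\<lambda>i. lo * (1 / \<beta> ^ Suc i)) sums (lo * (1/(\<beta>-1)))"
    by (rule sums_mult[OF geo_sums[OF b]])
  have gs: "(\<lambda>i. lo * (1 / \<beta> ^ Suc i) + h i) sums (lo/(\<beta>-1) + (c 1 - lo)/\<beta> + (c 2 - lo)/\<beta>^2)"
    using sums_add[OF g hs] by (simp add: h_def add.assoc)
  have "(\<Sum>i. lo * (1 / \<beta> ^ Suc i) + h i) \<le> S c \<beta>"
    unfolding S_def
  proof (rule suminf_le)
    fix i show "lo * (1 / \<beta> ^ Suc i) + h i \<le> c (Suc i) / \<beta> ^ Suc i"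
    proof (cases "i \<le> 1")
      case True then show ?thesis using b by (cases i) (auto simp: h_def field_simps power2_eq_square numeral_2_eq_2)
    next
      case False
      then have "lo \<le> c (Suc i)" using lo by auto
      then show ?thesis using False b by (simp add: h_def divide_right_mono)
    qed
  qed (use summ[of c M, OF M b] gs in \<open>auto simp: sums_iff\<close>)
  then show ?thesis using gs by (simp add: sums_iff)
qed

lemma smono:
  fixes c :: "nat \<Rightarrow> real"
  assumes M: "\<And>i. \<bar>c i\<bar> \<le> M" and pos: "\<And>i. i \<ge> 1 \<Longrightarrow> c i \<ge> 0" and c1: "c 1 > 0"
    and b: "1 < \<beta>1" "\<beta>1 < \<beta>2"
  shows "S c \<beta>2 < S c \<beta>1"
proof -
  have s1: "summable (\<lambda>i. c (Suc i) / \<beta>1 ^ Suc i)" using summ[of c M, OF M] b by auto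
  have s2: "summable (\<lambda>i. c (Suc i) / \<beta>2 ^ Suc i)" using summ[of c M, OF M] b by auto
  have "0 < (\<Sum>i. c (Suc i) / \<beta>1 ^ Suc i - c (Suc i) / \<beta>2 ^ Suc i)"
  proof (rule suminf_pos2[where i=0])
    show "summable (\<lambda>i. c (Suc i) / \<beta>1 ^ Suc i - c (Suc i) / \<beta>2 ^ Suc i)"
      using s1 s2 by (rule summable_diff)
    fix n
    have "\<beta>1 ^ Suc n \<le> \<beta>2 ^ Suc n" using b by (intro power_mono) auto
    moreover have "0 < \<beta>1 ^ Suc n" using b by simp
    moreover have "0 \<le> c (Suc n)" using pos by simp
    ultimately have "c (Suc n) / \<beta>2 ^ Suc n \<le> c (Suc n) / \<beta>1 ^ Suc n"
      by (intro divide_left_mono) auto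
    then show "0 \<le> c (Suc n) / \<beta>1 ^ Suc n - c (Suc n) / \<beta>2 ^ Suc n" by simp
  next
    show "0 < c (Suc 0) / \<beta>1 ^ Suc 0 - c (Suc 0) / \<beta>2 ^ Suc 0"
      using b c1 by (simp add: divide_strict_left_mono)
  qed
  then show ?thesis using suminf_diff[OF s1 s2] unfolding S_def by simp
qed

lemma scont:
  fixes c :: "nat \<Rightarrow> real"
  assumes M: "\<And>i. \<bar>c i\<bar> \<le> M" and a: "a > 1"
  shows "continuous_on {a..b} (S c)"
proof -
  define d where "d n = (if n = 0 then 0 else c n)" for n
  define P where "P x = (\<Sum>n. d n * x ^ n)" for x :: real
  have dM: "\<bar>d n\<bar> \<le> M" for n using M[of n] M[of 0] by (auto simp: d_def)
  have sP: "summable (\<lambda>n. d n * K ^ n)" if "\<bar>K\<bar> < 1" for K :: real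
  proof (rule summable_comparison_test[where g="\<lambda>n. M * \<bar>K\<bar> ^ n"])
    show "summable (\<lambda>n. M * \<bar>K\<bar> ^ n)" using that by (intro summable_mult summable_geometric) auto
    show "\<exists>N. \<forall>n\<ge>N. norm (d n * K ^ n) \<le> M * \<bar>K\<bar> ^ n"
      using dM by (auto simp: abs_mult power_abs intro!: mult_right_mono)
  qed
  have cP: "isCont P x" if "0 < x" "x < 1" for x
    unfolding P_def by (rule isCont_powser[where K="(x+1)/2"]) (use sP that in auto)
  have eq: "S c \<beta> = P (inverse \<beta>)" if "\<beta> > 1" for \<beta>
  proof -
    have "summable (\<lambda>n. d n * (inverse \<beta>) ^ n)" using that inverse_less_1_iff[of \<beta>] by (intro sP) auto
    from suminf_split_head[OF this]
    have "(\<Sum>n. d (Suc n) * (inverse \<beta>) ^ Suc n) = P (inverse \<beta>)" by (simp add: P_def d_def)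
    moreover have "(\<lambda>n. d (Suc n) * (inverse \<beta>) ^ Suc n) = (\<lambda>i. c (Suc i) / \<beta> ^ Suc i)"
      by (auto simp: d_def power_inverse divide_inverse)
    ultimately show ?thesis by (simp add: S_def)
  qed
  have "continuous_on {a..b} (\<lambda>\<beta>. P (inverse \<beta>))"
  proof (rule continuous_at_imp_continuous_on, intro ballI)
    fix \<beta> assume "\<beta> \<in> {a..b}"
    then have "\<beta> > 1" using a by auto
    then have i1: "0 < inverse \<beta>" "inverse \<beta> < 1" using inverse_less_1_iff[of \<beta>] by auto
    show "isCont (\<lambda>\<beta>. P (inverse \<beta>)) \<beta>"
      using \<open>\<beta> > 1\<close> by (intro isCont_o2[where f=inverse and g=P] cP i1) (auto intro!: continuous_intros)
  qed
  then show ?thesis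
    by (rule continuous_on_cong[THEN iffD1, rotated -1]) (use eq a in auto)
qed

lemma locate:
  fixes c :: "nat \<Rightarrow> real"
  assumes M: "\<And>i. \<bar>c i\<bar> \<le> M" and pos: "\<And>i. i \<ge> 1 \<Longrightarrow> c i \<ge> 0" and c1: "c 1 > 0"
    and a: "1 < a" "a \<le> b" and Sb: "S c b \<le> 1" and Sa: "1 \<le> S c a"
  shows "a \<le> (THE \<beta>. \<beta> > 1 \<and> (\<lambda>i. c (Suc i) / \<beta> ^ Suc i) sums 1)
       \<and> (THE \<beta>. \<beta> > 1 \<and> (\<lambda>i. c (Suc i) / \<beta> ^ Suc i) sums 1) \<le> b"
proof -
  obtain z where z: "a \<le> z" "z \<le> b" "S c z = 1"
    using IVT2'[of "S c" b 1 a, OF Sb Sa a(2) scont[of c M, OF M a(1)]] by auto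
  have P: "z > 1 \<and> (\<lambda>i. c (Suc i) / z ^ Suc i) sums 1"
    using z a summ[OF M, of z] by (auto simp: S_def sums_iff)
  have U: "\<beta> = z" if "\<beta> > 1 \<and> (\<lambda>i. c (Suc i) / \<beta> ^ Suc i) sums 1" for \<beta>
  proof -
    have "S c \<beta> = 1" using that by (auto simp: S_def sums_iff)
    moreover have False if "\<beta> < z" using smono[of c M, OF M pos c1, of \<beta> z] that \<open>\<beta> > 1 \<and> _\<close> z \<open>S c \<beta> = 1\<close> by auto
    moreover have False if "z < \<beta>" using smono[of c M, OF M pos c1, of z \<beta>] that P z \<open>S c \<beta> = 1\<close> by auto
    ultimately show ?thesis by fastforce
  qed
  have "(THE \<beta>. \<beta> > 1 \<and> (\<lambda>i. c (Suc i) / \<beta> ^ Suc i) sums 1) = z"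
    by (rule the_equality[where a=z]) (use P U in blast)+
  then show ?thesis using z by simp
qed

lemma lam_even: "lam (2*k) i = int k + thue_morse i - thue_morse (i-1)"
  by (simp add: lam_def Let_def)
lemma lam_odd: "lam (2*k+1) i = int k + thue_morse i"
  by (simp add: lam_def Let_def)

lemma tmr: "real_of_int (thue_morse i) = 0 \<or> real_of_int (thue_morse i) = 1"
  using tm01[of i] by auto

lemma even_case:
  assumes k: "k \<ge> 1" and a: "1 < a" "a \<le> b"
    and ub: "(real k+1)/(b-1) - 1/b^2 \<le> 1"
    and lb: "1 \<le> (real k-1)/(a-1) + 2/a + 1/a^2"
  shows "a \<le> beta_c (2*k) \<and> beta_c (2*k) \<le> b"
proof -
  define c where "c i = real k + real_of_int (thue_morse i) - real_of_int (thue_morse (i-1))" for i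
  have bc: "beta_c (2*k) = (THE \<beta>. \<beta> > 1 \<and> (\<lambda>i. c (Suc i) / \<beta> ^ Suc i) sums 1)"
    unfolding beta_c_def c_def lam_even by simp
  have M: "\<bar>c i\<bar> \<le> real k + 1" for i using tmr[of i] tmr[of "i-1"] by (auto simp: c_def)
  have hi: "c i \<le> real k + 1" for i using tmr[of i] tmr[of "i-1"] by (auto simp: c_def)
  have lo: "real k - 1 \<le> c i" for i using tmr[of i] tmr[of "i-1"] by (auto simp: c_def)
  have pos: "c i \<ge> 0" for i using lo[of i] k by linarith
  have c1: "c 1 = real k + 1" by (simp add: c_def tm1s tm0)
  have c2: "c 2 = real k" by (simp add: c_def tm1s tm2)
  have Sb: "S c b \<le> 1"
    using upper[of c "real k + 1" b "real k + 1", OF M] a hi ub using c1 by (simp add: c1 c2)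
  have Sa: "1 \<le> S c a"
    using lower[of c "real k + 1" a "real k - 1", OF M] a lo lb using c1 by (simp add: c1 c2)
  show ?thesis unfolding bc
    by (rule locate[of c "real k + 1", OF M pos _ a Sb Sa]) (use c1 in auto)
qed

lemma odd_case:
  assumes a: "1 < a" "a \<le> b"
    and ub: "(real k+1)/(b-1) \<le> 1"
    and lb: "1 \<le> real k/(a-1) + 1/a + 1/a^2"
  shows "a \<le> beta_c (2*k+1) \<and> beta_c (2*k+1) \<le> b"
proof -
  define c where "c i = real k + real_of_int (thue_morse i)" for i
  have bc: "beta_c (2*k+1) = (THE \<beta>. \<beta> > 1 \<and> (\<lambda>i. c (Suc i) / \<beta> ^ Suc i) sums 1)"
    unfolding beta_c_def c_def lam_odd by simp
  have M: "\<bar>c i\<bar> \<le> real k + 1" for i using tmr[of i] by (auto simp: c_def)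
  have hi: "c i \<le> real k + 1" for i using tmr[of i] by (auto simp: c_def)
  have lo: "real k \<le> c i" for i using tmr[of i] by (auto simp: c_def)
  have pos: "c i \<ge> 0" for i using lo[of i] by linarith
  have c1: "c 1 = real k + 1" by (simp add: c_def tm1s)
  have c2: "c 2 = real k + 1" by (simp add: c_def tm2)
  have "S c b \<le> (real k+1)/(b-1)"
    using upper[of c "real k + 1" b "real k + 1", OF M] a hi using c1 by (simp add: c1 c2)
  then have Sb: "S c b \<le> 1" using ub by linarith
  have Sa: "1 \<le> S c a"
    using lower[of c "real k + 1" a "real k", OF M] a lo lb using c1 by (simp add: c1 c2)
  show ?thesis unfolding bc
    by (rule locate[of c "real k + 1", OF M pos _ a Sb Sa]) (use c1 in auto)
qed

lemma bf_odd:
  shows "0 \<le> real k + 2 - beta_f (2*k+1) \<and> real k + 2 - beta_f (2*k+1) \<le> 1/(real k+1)^2"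
proof -
  define K where "K = real k"
  define p where "p x = x^3 - (K+2) * x^2 + x - (K+1)" for x :: real
  define R where "R = {x. p x = 0}"
  have bf: "beta_f (2*k+1) = Max R"
    by (simp add: beta_f_def Let_def R_def p_def K_def)
  have "R = {x. poly [:-(K+1), 1, -(K+2), 1:] x = 0}"
    by (auto simp: R_def p_def algebra_simps power2_eq_square power3_eq_cube)
  moreover have "finite {x. poly [:-(K+1), 1, -(K+2), 1:] x = 0}"
    by (rule poly_roots_finite) simp
  ultimately have fin: "finite R" by simp
  have "\<exists>x. K+1 \<le> x \<and> x \<le> K+2 \<and> p x = 0"
  proof (rule IVT')
    have "K \<ge> 0" by (simp add: K_def)
    then have "0 \<le> K * K + K * 2" by simp
    then show "p (K+1) \<le> 0" by (simp add: p_def algebra_simps power2_eq_square power3_eq_cube)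
    show "0 \<le> p (K+2)" by (simp add: p_def algebra_simps power2_eq_square power3_eq_cube)
    show "continuous_on {K+1..K+2} p" unfolding p_def by (intro continuous_intros)
  qed simp
  then obtain r where r: "K+1 \<le> r" "p r = 0" by blast
  then have "r \<in> R" by (simp add: R_def)
  then have mR: "Max R \<in> R" and mr: "r \<le> Max R" using fin Max_in Max_ge by auto
  define m where "m = Max R"
  have pm: "p m = 0" using mR by (simp add: R_def m_def)
  have m1: "K + 1 \<le> m" using mr r by (simp add: m_def)
  have eq: "m^2 * (K+2-m) = m - (K+1)" using pm by (simp add: p_def algebra_simps power2_eq_square power3_eq_cube)
  have K0: "K \<ge> 0" by (simp add: K_def)
  have lt: "m < K + 2"
  proof (rule ccontr)
    assume "\<not> m < K + 2"
    moreover have "m^2 * (K+2-m) \<le> 0" using calculation by (simp add: mult_nonneg_nonpos)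
    ultimately show False using eq m1 by linarith
  qed
  have sq: "(K+1)^2 \<le> m^2" using m1 K0 by (intro power_mono) auto
  have "(K+2-m) * (K+1)^2 \<le> (K+2-m) * m^2" using lt sq by (intro mult_left_mono) auto
  also have "\<dots> \<le> 1" using eq lt by (simp add: mult.commute)
  finally have "(K+2-m) \<le> 1/(K+1)^2" using K0 by (simp add: field_simps)
  moreover have "beta_f (2*k+1) = m" using bf m_def by simp
  ultimately show ?thesis using lt unfolding K_def by simp
qed

theorem theorem4p8:
  shows "(\<forall>k. G (2*k) = real k + 1)
    \<and> (\<lambda>k. beta_f (2*k) - (real k + 2)) \<in> O(\<lambda>k. 1 / real k)
    \<and> (\<lambda>k. beta_c (2*k) - (real k + 2)) \<longlonglongrightarrow> 0
    \<and> (\<lambda>k. G (2*k+1) - (real k + 2)) \<in> O(\<lambda>k. 1 / real k)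
    \<and> (\<lambda>k. beta_f (2*k+1) - (real k + 2)) \<longlonglongrightarrow> 0
    \<and> (\<lambda>k. beta_c (2*k+1) - (real k + 2)) \<longlonglongrightarrow> 0"
proof (intro conjI)
  show "\<forall>k. G (2*k) = real k + 1" by (simp add: G_def Let_def)
  have "(\<lambda>k. beta_f (2*k) - (real k + 2)) =
        (\<lambda>k. (real k + 1 + sqrt (real k ^2 + 6*real k + 1)) / 2 - (real k + 2))"
    by (simp add: beta_f_def Let_def fun_eq_iff)
  also have "\<dots> \<in> O(\<lambda>k. 1 / real k)" by real_asymp
  finally show "(\<lambda>k. beta_f (2*k) - (real k + 2)) \<in> O(\<lambda>k. 1 / real k)" .
  have "(\<lambda>k. G (2*k+1) - (real k + 2)) =
        (\<lambda>k. (real k + 1 + sqrt (real k ^2 + 6*real k + 5)) / 2 - (real k + 2))"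
    by (simp add: G_def Let_def fun_eq_iff)
  also have "\<dots> \<in> O(\<lambda>k. 1 / real k)" by real_asymp
  finally show "(\<lambda>k. G (2*k+1) - (real k + 2)) \<in> O(\<lambda>k. 1 / real k)" .
  show "(\<lambda>k. beta_f (2*k+1) - (real k + 2)) \<longlonglongrightarrow> 0"
  proof (rule tendsto_sandwich[of "\<lambda>k. - (1/(real k+1)^2)" _ _ "\<lambda>k. 0"])
    show "\<forall>\<^sub>F k in sequentially. - (1/(real k+1)^2) \<le> beta_f (2*k+1) - (real k + 2)"
      using bf_odd by (intro always_eventually) (auto simp: algebra_simps)
    show "\<forall>\<^sub>F k in sequentially. beta_f (2*k+1) - (real k + 2) \<le> 0"
      using bf_odd by (intro always_eventually) (auto simp: algebra_simps)
    show "(\<lambda>k. - (1/(real k+1)^2)) \<longlonglongrightarrow> 0" by real_asymp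
  qed simp
  have lim1: "(\<lambda>k. - (1/sqrt (real k))) \<longlonglongrightarrow> 0" by real_asymp
  have lim2: "(\<lambda>k. 1/sqrt (real k)) \<longlonglongrightarrow> 0" by real_asymp
  have E1: "\<forall>\<^sub>F k in sequentially. k \<ge> (1::nat)" by (rule eventually_ge_at_top)
  have E2: "\<forall>\<^sub>F k in sequentially. 1 < real k + 2 - 1/sqrt (real k)" by real_asymp
  have E4: "\<forall>\<^sub>F k in sequentially. (real k+1)/((real k + 2 + 1/sqrt (real k))-1)
      - 1/(real k + 2 + 1/sqrt (real k))^2 \<le> 1" by real_asymp
  have E5: "\<forall>\<^sub>F k in sequentially. 1 \<le> (real k-1)/((real k + 2 - 1/sqrt (real k))-1)
      + 2/(real k + 2 - 1/sqrt (real k)) + 1/(real k + 2 - 1/sqrt (real k))^2" by real_asymp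
  have E4': "\<forall>\<^sub>F k in sequentially. (real k+1)/((real k + 2 + 1/sqrt (real k))-1) \<le> 1"
    by real_asymp
  have E5': "\<forall>\<^sub>F k in sequentially. 1 \<le> real k/((real k + 2 - 1/sqrt (real k))-1)
      + 1/(real k + 2 - 1/sqrt (real k)) + 1/(real k + 2 - 1/sqrt (real k))^2" by real_asymp
  have evE: "\<forall>\<^sub>F k in sequentially. real k + 2 - 1/sqrt (real k) \<le> beta_c (2*k)
      \<and> beta_c (2*k) \<le> real k + 2 + 1/sqrt (real k)"
    using E1 E2 E4 E5
  proof eventually_elim
    case (elim k)
    show ?case by (rule even_case) (use elim in auto)
  qed
  have evO: "\<forall>\<^sub>F k in sequentially. real k + 2 - 1/sqrt (real k) \<le> beta_c (2*k+1)
      \<and> beta_c (2*k+1) \<le> real k + 2 + 1/sqrt (real k)"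
    using E2 E4' E5'
  proof eventually_elim
    case (elim k)
    show ?case by (rule odd_case) (use elim in auto)
  qed
  show "(\<lambda>k. beta_c (2*k) - (real k + 2)) \<longlonglongrightarrow> 0"
    by (rule tendsto_sandwich[OF _ _ lim1 lim2]) (use evE in \<open>auto elim: eventually_mono\<close>)
  show "(\<lambda>k. beta_c (2*k+1) - (real k + 2)) \<longlonglongrightarrow> 0"
    by (rule tendsto_sandwich[OF _ _ lim1 lim2]) (use evO in \<open>auto elim: eventually_mono\<close>)
qed

end
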